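(* Let $p\ge1$, $m=2^p$, $U_m=\frac{1}{\sqrt m}H(m)$, and let two identical particles be injected in an arbitrary pair of distinct input modes $a<b$ (input state $(a,b)$). Then the number of suppressed output states $(i,j)$, $1\le i\le j\le m$, equals $m^2/4$ if the particles are bosons (fraction $\frac12\frac{m}{m+1}$), and equals $\frac12 m(m+1)-\frac{m^2}{4}$ if the particles are fermions (fraction $\frac12\frac{m+2}{m+1}$); i.e. the same numbers as for the input $(1,2)$.
   Context: For $m=2^p$, the Sylvester matrix $H(m)$ is defined recursively by $H(1)=[1]$ and $H(2^p)=\begin{bmatrix}H(2^{p-1})&H(2^{p-1})\\ H(2^{p-1})&-H(2^{p-1})\end{bmatrix}$, rows and columns indexed $1,\dots,m$. An $n$-particle state on $m$ modes is a nondecreasing tuple $\vec t=(t_1\le\dots\le t_n)$ with $t_i\in\{1,\dots,m\}$; $\mu_k(\vec t)=|\{i:t_i=k\}|$. For input $\vec s$ and output $\vec t$, the scattering matrix is $S_{i,j}=U_{t_i,s_j}$; the bosonic amplitude is $\mathrm{perm}\,S/\sqrt{\prod_k\mu_k(\vec s)!\prod_k\mu_k(\vec t)!}$ and the fermionic amplitude is $\det S/\sqrt{\prod_k\mu_k(\vec s)!\prod_k\mu_k(\vec t)!}$. An output state is suppressed if its amplitude is zero. *)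

theory Defs
  imports Complex_Main "HOL-Combinatorics.Permutations"
begin

text \<open>Sylvester matrix H(2^p), rows and columns indexed 1..2^p (entries outside
  this range are irrelevant).\<close>
fun sylvester :: "nat \<Rightarrow> nat \<Rightarrow> nat \<Rightarrow> real" where
  "sylvester 0 i j = 1"
| "sylvester (Suc p) i j =
     (let h = 2 ^ p in
      if i \<le> h \<and> j \<le> h then sylvester p i j
      else if i \<le> h then sylvester p i (j - h)
      else if j \<le> h then sylvester p (i - h) j
      else - sylvester p (i - h) (j - h))"

definition Umat :: "nat \<Rightarrow> nat \<Rightarrow> nat \<Rightarrow> real" where
  "Umat p i j = sylvester p i j / sqrt (real (2 ^ p))"

text \<open>States are lists (t_1,...,t_n) (nondecreasing) of modes. mu k t = occupation of mode k.\<close>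
definition occ :: "nat \<Rightarrow> nat list \<Rightarrow> nat" where
  "occ k t = length (filter (\<lambda>x. x = k) t)"

definition scattering :: "(nat \<Rightarrow> nat \<Rightarrow> real) \<Rightarrow> nat list \<Rightarrow> nat list \<Rightarrow> nat \<Rightarrow> nat \<Rightarrow> real" where
  "scattering U s t i j = U (t ! i) (s ! j)"

definition permanent :: "nat \<Rightarrow> (nat \<Rightarrow> nat \<Rightarrow> real) \<Rightarrow> real" where
  "permanent n S = (\<Sum>\<sigma> \<in> {\<sigma>. \<sigma> permutes {..<n}}. \<Prod>i<n. S i (\<sigma> i))"

definition determinant :: "nat \<Rightarrow> (nat \<Rightarrow> nat \<Rightarrow> real) \<Rightarrow> real" where
  "determinant n S = (\<Sum>\<sigma> \<in> {\<sigma>. \<sigma> permutes {..<n}}. of_int (sign \<sigma>) * (\<Prod>i<n. S i (\<sigma> i)))"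

definition occ_norm :: "nat \<Rightarrow> nat list \<Rightarrow> nat list \<Rightarrow> real" where
  "occ_norm m s t = sqrt (real ((\<Prod>k\<in>{1..m}. fact (occ k s)) * (\<Prod>k\<in>{1..m}. fact (occ k t))))"

definition boson_amp :: "nat \<Rightarrow> (nat \<Rightarrow> nat \<Rightarrow> real) \<Rightarrow> nat list \<Rightarrow> nat list \<Rightarrow> real" where
  "boson_amp m U s t = permanent (length s) (scattering U s t) / occ_norm m s t"

definition fermion_amp :: "nat \<Rightarrow> (nat \<Rightarrow> nat \<Rightarrow> real) \<Rightarrow> nat list \<Rightarrow> nat list \<Rightarrow> real" where
  "fermion_amp m U s t = determinant (length s) (scattering U s t) / occ_norm m s t"

end

theory Submission imports Defs begin

lemma syl_sq: "(sylvester p i j)^2 = 1"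
  by (induction p arbitrary: i j) (auto simp: Let_def)

lemma split_sum: "(\<Sum>i=1..h+h. f i) = (\<Sum>i=1..h. f i) + (\<Sum>i=1..h. f (i+h)) " for f :: "nat \<Rightarrow> real"
proof -
  have "{1..h+h} = {1..h} \<union> {h+1..h+h}" by auto
  then have "(\<Sum>i=1..h+h. f i) = (\<Sum>i=1..h. f i) + (\<Sum>i=h+1..h+h. f i)"
    by (simp add: sum.union_disjoint)
  also have "(\<Sum>i=h+1..h+h. f i) = (\<Sum>i=1..h. f (i+h))"
    using sum.shift_bounds_cl_nat_ivl[of f 1 h h] by (simp add: add.commute)
  finally show ?thesis .
qed

lemma syl_orth: "1\<le>a \<Longrightarrow> a\<le>2^p \<Longrightarrow> 1\<le>b \<Longrightarrow> b\<le>2^p \<Longrightarrow>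
  (\<Sum>i=1..2^p. sylvester p i a * sylvester p i b) = (if a=b then 2^p else 0)"
proof (induction p arbitrary: a b)
  case 0
  then show ?case by simp
next
  case (Suc p)
  define h :: nat where "h = 2^p"
  have hh: "(2::nat)^Suc p = h + h" by (simp add: h_def)
  have lo: "sylvester (Suc p) i x = (if x \<le> h then sylvester p i x else sylvester p i (x-h))"
    if "i \<le> h" for i x using that by (simp add: Let_def h_def)
  have hi: "sylvester (Suc p) (i+h) x = (if x \<le> h then sylvester p i x else - sylvester p i (x-h))"
    if "1 \<le> i" for i x using that by (simp add: Let_def h_def)
  have S: "(\<Sum>i=1..2^Suc p. sylvester (Suc p) i a * sylvester (Suc p) i b)
     = (\<Sum>i=1..h. sylvester (Suc p) i a * sylvester (Suc p) i b)
       + (\<Sum>i=1..h. sylvester (Suc p) (i+h) a * sylvester (Suc p) (i+h) b)"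
    unfolding hh by (rule split_sum)
  have S1: "(\<Sum>i=1..h. sylvester (Suc p) i a * sylvester (Suc p) i b)
     = (\<Sum>i=1..h. (if a \<le> h then sylvester p i a else sylvester p i (a-h)) *
                   (if b \<le> h then sylvester p i b else sylvester p i (b-h)))"
    by (rule sum.cong) (auto simp: lo simp del: sylvester.simps)
  have S2: "(\<Sum>i=1..h. sylvester (Suc p) (i+h) a * sylvester (Suc p) (i+h) b)
     = (\<Sum>i=1..h. (if a \<le> h then sylvester p i a else - sylvester p i (a-h)) *
                   (if b \<le> h then sylvester p i b else - sylvester p i (b-h)))"
    by (rule sum.cong) (auto simp: hi simp del: sylvester.simps)
  have IH: "\<And>a b. 1\<le>a \<Longrightarrow> a\<le>h \<Longrightarrow> 1\<le>b \<Longrightarrow> b\<le>h \<Longrightarrow>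
     (\<Sum>i=1..h. sylvester p i a * sylvester p i b) = (if a=b then h else 0)"
    using Suc.IH unfolding h_def by simp
  have ab: "1 \<le> a" "a \<le> h + h" "1 \<le> b" "b \<le> h+h" using Suc.prems hh by auto
  show ?case
  proof (cases "a \<le> h")
    case True
    show ?thesis
    proof (cases "b \<le> h")
      case True
      then show ?thesis using \<open>a \<le> h\<close> ab IH[of a b] by (subst S, subst S1, subst S2) (simp add: hh h_def del: sylvester.simps)
    next
      case False
      have "(\<Sum>i=1..h. sylvester p i a * - sylvester p i (b-h)) = - (\<Sum>i=1..h. sylvester p i a * sylvester p i (b-h))"
        by (simp add: sum_negf)
      then show ?thesis using \<open>a \<le> h\<close> False ab by (subst S, subst S1, subst S2) (simp add: hh h_def del: sylvester.simps)
    qed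
  next
    case False
    show ?thesis
    proof (cases "b \<le> h")
      case True
      have "(\<Sum>i=1..h. - sylvester p i (a-h) * sylvester p i b) = - (\<Sum>i=1..h. sylvester p i (a-h) * sylvester p i b)"
        by (simp add: sum_negf)
      then show ?thesis using False True ab by (subst S, subst S1, subst S2) (simp add: hh h_def del: sylvester.simps)
    next
      case F2: False
      have e: "(a - h = b - h) = (a = b)" using False F2 by auto
      show ?thesis using False F2 ab IH[of "a-h" "b-h"] e by (subst S, subst S1, subst S2) (simp add: hh h_def del: sylvester.simps)
    qed
  qed
qed


lemma perm2_set: "{\<sigma>. \<sigma> permutes {..<2::nat}} = {id, transpose 0 1}"
proof
  show "{id, transpose 0 1} \<subseteq> {\<sigma>. \<sigma> permutes {..<2::nat}}"
    by (auto intro: permutes_id permutes_swap_id)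
next
  show "{\<sigma>. \<sigma> permutes {..<2::nat}} \<subseteq> {id, transpose 0 1}"
  proof
    fix \<sigma> assume "\<sigma> \<in> {\<sigma>. \<sigma> permutes {..<2::nat}}"
    then have P: "\<sigma> permutes {..<2::nat}" by simp
    have o: "\<And>x. x \<notin> {..<2::nat} \<Longrightarrow> \<sigma> x = x" using P by (simp add: permutes_def)
    have i0: "\<sigma> 0 \<in> {..<2}" "\<sigma> 1 \<in> {..<2}" by (rule iffD2[OF permutes_in_image[OF P]], simp)+
    have ne: "\<sigma> 0 \<noteq> \<sigma> 1" using permutes_inj[OF P] by (metis inj_eq zero_neq_one)
    show "\<sigma> \<in> {id, transpose 0 1}"
    proof (cases "\<sigma> 0 = 0")
      case True
      then have "\<sigma> 1 = 1" using i0 ne by auto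
      have "\<sigma> = id"
      proof
        fix x show "\<sigma> x = id x"
          using True \<open>\<sigma> 1 = 1\<close> o[of x] by (cases "x < 2") (auto simp: less_2_cases_iff)
      qed
      then show ?thesis by simp
    next
      case False
      then have a: "\<sigma> 0 = 1" using i0 by auto
      then have b: "\<sigma> 1 = 0" using i0 ne by auto
      have "\<sigma> = transpose 0 1"
      proof
        fix x show "\<sigma> x = transpose 0 1 x"
          using a b o[of x] by (cases "x < 2") (auto simp: transpose_def less_2_cases_iff)
      qed
      then show ?thesis by simp
    qed
  qed
qed

lemma permanent2: "permanent 2 S = S 0 0 * S 1 1 + S 0 1 * S 1 0"
proof -
  have ne: "id \<noteq> (transpose 0 1 :: nat \<Rightarrow> nat)" by (metis id_apply transpose_apply_first zero_neq_one)
  have l2: "{..<2::nat} = {0,1}" by auto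
  show ?thesis unfolding permanent_def perm2_set using ne by (simp add: l2)
qed

lemma determinant2: "determinant 2 S = S 0 0 * S 1 1 - S 0 1 * S 1 0"
proof -
  have ne: "id \<noteq> (transpose 0 1 :: nat \<Rightarrow> nat)" by (metis id_apply transpose_apply_first zero_neq_one)
  have l2: "{..<2::nat} = {0,1}" by auto
  show ?thesis unfolding determinant_def perm2_set using ne by (simp add: l2 sign_swap_id)
qed

lemma occ_norm_nz: "occ_norm m s t \<noteq> 0"
  by (simp add: occ_norm_def)

lemma pm1: "(x::real)^2 = 1 \<Longrightarrow> x = 1 \<or> x = -1"
  by (simp add: power2_eq_1_iff)

lemma sign_alg: "(x::real)^2 = 1 \<Longrightarrow> y^2=1 \<Longrightarrow> z^2=1 \<Longrightarrow> w^2=1 \<Longrightarrow>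
   (x*w + y*z = 0 \<longleftrightarrow> (x*y)*(z*w) = -1) \<and> (x*w - y*z = 0 \<longleftrightarrow> (x*y)*(z*w) = 1)"
proof -
  assume a: "(x::real)^2 = 1" "y^2=1" "z^2=1" "w^2=1"
  from pm1[OF a(1)] pm1[OF a(2)] pm1[OF a(3)] pm1[OF a(4)] show ?thesis
    by (elim disjE) simp_all
qed

lemma boson_iff:
  "boson_amp m (Umat p) [a,b] [i,j] = 0 \<longleftrightarrow>
     (sylvester p i a * sylvester p i b) * (sylvester p j a * sylvester p j b) = -1"
proof -
  have "boson_amp m (Umat p) [a,b] [i,j] = 0 \<longleftrightarrow>
     sylvester p i a * sylvester p j b + sylvester p i b * sylvester p j a = 0"
    using occ_norm_nz[of m "[a,b]" "[i,j]"]
    by (simp add: boson_amp_def permanent2[unfolded numeral_2_eq_2] scattering_def Umat_def divide_simps)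
  then show ?thesis using sign_alg[of "sylvester p i a" "sylvester p i b" "sylvester p j a" "sylvester p j b"] by (simp add: syl_sq)
qed

lemma fermion_iff:
  "fermion_amp m (Umat p) [a,b] [i,j] = 0 \<longleftrightarrow>
     (sylvester p i a * sylvester p i b) * (sylvester p j a * sylvester p j b) = 1"
proof -
  have "fermion_amp m (Umat p) [a,b] [i,j] = 0 \<longleftrightarrow>
     sylvester p i a * sylvester p j b - sylvester p i b * sylvester p j a = 0"
    using occ_norm_nz[of m "[a,b]" "[i,j]"]
    by (simp add: fermion_amp_def determinant2[unfolded numeral_2_eq_2] scattering_def Umat_def divide_simps)
  then show ?thesis using sign_alg[of "sylvester p i a" "sylvester p i b" "sylvester p j a" "sylvester p j b"] by (simp add: syl_sq)
qed

lemma card_tri: "2 * card {(i, j). 1 \<le> i \<and> i \<le> j \<and> j \<le> (n::nat)} = n * (n + 1)"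
proof (induction n)
  case 0
  have "{(i, j). 1 \<le> i \<and> i \<le> j \<and> j \<le> (0::nat)} = {}" by auto
  then show ?case by (simp only: card.empty)
next
  case (Suc n)
  have e: "{(i, j). 1 \<le> i \<and> i \<le> j \<and> j \<le> Suc n} =
     {(i, j). 1 \<le> i \<and> i \<le> j \<and> j \<le> n} \<union> (\<lambda>i. (i, Suc n)) ` {1..Suc n}"
    by auto
  have f: "finite {(i, j). 1 \<le> i \<and> i \<le> j \<and> j \<le> n}"
    by (rule finite_subset[of _ "{1..n} \<times> {1..n}"]) auto
  have d: "{(i, j). 1 \<le> i \<and> i \<le> j \<and> j \<le> n} \<inter> (\<lambda>i. (i, Suc n)) ` {1..Suc n} = {}"
    by auto
  have c: "card ((\<lambda>i. (i, Suc n)) ` {1..Suc n}) = Suc n"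
    by (subst card_image) (auto simp: inj_on_def)
  show ?case unfolding e using Suc.IH f d c by (simp add: card_Un_disjoint)
qed

theorem proposition3:
  fixes p a b :: nat
  assumes "p \<ge> 1" and "1 \<le> a" and "a < b" and "b \<le> 2 ^ p"
  shows "card {(i, j). 1 \<le> i \<and> i \<le> j \<and> j \<le> 2 ^ p \<and>
                 boson_amp (2 ^ p) (Umat p) [a, b] [i, j] = 0} = (2 ^ p) ^ 2 div 4
       \<and> card {(i, j). 1 \<le> i \<and> i \<le> j \<and> j \<le> 2 ^ p \<and>
                 fermion_amp (2 ^ p) (Umat p) [a, b] [i, j] = 0}
           = (2 ^ p) * (2 ^ p + 1) div 2 - (2 ^ p) ^ 2 div 4"
proof -
  define m :: nat where "m = 2^p"
  define g where "g i = sylvester p i a * sylvester p i b" for i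
  have g1: "g i = 1 \<or> g i = -1" for i
  proof -
    have "(g i)^2 = 1" unfolding g_def by (simp add: power_mult_distrib syl_sq)
    then show ?thesis by (rule pm1)
  qed
  define P where "P = {i\<in>{1..m}. g i = 1}"
  define N where "N = {i\<in>{1..m}. g i = -1}"
  have fP: "finite P" and fN: "finite N" by (auto simp: P_def N_def)
  have U: "{1..m} = P \<union> N" using g1 by (auto simp: P_def N_def)
  have D: "P \<inter> N = {}" by (auto simp: P_def N_def)
  have "(\<Sum>i=1..m. g i) = 0"
    using syl_orth[of a p b] assms unfolding g_def m_def by simp
  also have "(\<Sum>i=1..m. g i) = (\<Sum>i\<in>P. g i) + (\<Sum>i\<in>N. g i)"
    unfolding U using fP fN D by (simp add: sum.union_disjoint)
  also have "(\<Sum>i\<in>P. g i) = real (card P)" by (simp add: P_def)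
  also have "(\<Sum>i\<in>N. g i) = - real (card N)" by (simp add: N_def)
  finally have cPN: "card P = card N" by simp
  have cm: "card P + card N = m" using U D fP fN card_Un_disjoint by (metis card_atLeastAtMost diff_Suc_1)
  have bi: "boson_amp (2^p) (Umat p) [a,b] [i,j] = 0 \<longleftrightarrow> g i \<noteq> g j" for i j
    using boson_iff[of "2^p" p a b i j] g1[of i] g1[of j] unfolding g_def by auto
  have fi: "fermion_amp (2^p) (Umat p) [a,b] [i,j] = 0 \<longleftrightarrow> g i = g j" for i j
    using fermion_iff[of "2^p" p a b i j] g1[of i] g1[of j] unfolding g_def by auto
  define B where "B = {(i, j). 1 \<le> i \<and> i \<le> j \<and> j \<le> m \<and> g i \<noteq> g j}"
  define T where "T = {(i, j). 1 \<le> i \<and> i \<le> j \<and> j \<le> m}"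
  have Beq: "{(i, j). 1 \<le> i \<and> i \<le> j \<and> j \<le> 2 ^ p \<and>
                 boson_amp (2 ^ p) (Umat p) [a, b] [i, j] = 0} = B"
    unfolding B_def m_def using bi by simp
  have Feq: "{(i, j). 1 \<le> i \<and> i \<le> j \<and> j \<le> 2 ^ p \<and>
                 fermion_amp (2 ^ p) (Umat p) [a, b] [i, j] = 0} = T - B"
    unfolding B_def T_def m_def using fi by auto
  have fT: "finite T" by (rule finite_subset[of _ "{1..m} \<times> {1..m}"]) (auto simp: T_def)
  have BT: "B \<subseteq> T" by (auto simp: B_def T_def)
  have bij: "bij_betw (\<lambda>(x, y). (min x y, max x y)) (P \<times> N) B"
  proof (rule bij_betwI')
    fix u v assume "u \<in> P \<times> N" "v \<in> P \<times> N"
    then show "((\<lambda>(x, y). (min x y, max x y)) u = (\<lambda>(x, y). (min x y, max x y)) v) = (u = v)"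
      using D by (cases u; cases v) (auto simp: min_def max_def split: if_splits)
  next
    fix u assume "u \<in> P \<times> N"
    then show "(\<lambda>(x, y). (min x y, max x y)) u \<in> B"
      by (cases u) (auto simp: P_def N_def B_def min_def max_def)
  next
    fix v assume v: "v \<in> B"
    obtain i j where ij: "v = (i, j)" by (cases v)
    show "\<exists>u\<in>P \<times> N. v = (\<lambda>(x, y). (min x y, max x y)) u"
    proof (cases "g i = 1")
      case True
      then have "g j = -1" using v ij g1[of j] by (auto simp: B_def)
      then show ?thesis using True v ij
        by (intro bexI[of _ "(i,j)"]) (auto simp: B_def P_def N_def)
    next
      case False
      then have "g i = -1" "g j = 1" using v ij g1[of j] g1[of i] by (auto simp: B_def)
      then show ?thesis using v ij
        by (intro bexI[of _ "(j,i)"]) (auto simp: B_def P_def N_def)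
    qed
  qed
  have cB: "card B = card P * card N" using bij_betw_same_card[OF bij] by (simp add: card_cartesian_product)
  have cT: "2 * card T = m * (m + 1)" unfolding T_def by (rule card_tri)
  have m2: "m = 2 * card P" using cm cPN by simp
  have r1: "card B = m^2 div 4" using cB cPN m2 by (simp add: power2_eq_square)
  have r2: "card (T - B) = m * (m+1) div 2 - m^2 div 4"
    using card_Diff_subset[OF finite_subset[OF BT fT] BT] r1 cT by simp
  show ?thesis using Beq Feq r1 r2 unfolding m_def by simp
qed

end
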